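(* Assume the standing setting and the type II decomposition for a type II edge $e=uw$ ($u\in U$, $w\in W$), and suppose $\omega=2$. Then: (i) $|U_1|=|W_1|+1$, $|U_4|=|W_4|+1$, $|W_2|=|U_2|+1$ and $|W_3|=|U_3|+1$; (ii) if $U_2\neq\emptyset$, then $E_G[U_2,W_1]=\{e\}$ when $W_1\neq\emptyset$, and $E_G[U_2,W_3]=\{e\}$ when $W_1=\emptyset$; (iii) if $U_2=\emptyset$, then $E_G[U_4,W_1]=\{e\}$ when $W_1\neq\emptyset$, and $E_G[U_4,W_3]=\{e\}$ when $W_1=\emptyset$.
   Context: Graphs may have multiple edges but no loops. An edge is admissible if it lies in some perfect matching; a connected graph with at least two vertices is matching covered if every edge is admissible; an edge $e$ of a matching covered graph $G$ is removable if $G-e$ is matching covered, and nonremovable otherwise. A brick is a 3-connected nonbipartite graph $G$ such that $G-x-y$ has a perfect matching for all distinct $x,y$. A nonbipartite matching covered graph $G$ is near-bipartite if it has a pair of edges $\{e_1,e_2\}$ (a removable doubleton) such that $G-\{e_1,e_2\}$ is bipartite matching covered. For a graph with a perfect matching, a nonempty vertex set $S$ is a barrier if the number of odd components of $G-S$ equals $|S|$. $E_G[X,Y]$ is the set of edges with one end in $X$ and the other in $Y$. Standing setting: $G$ is a near-bipartite brick with removable doubleton $\{e_1,e_2\}$, $H=G-\{e_1,e_2\}$, and $(U,W)$ is the bipartition of $H$, labelled so that both ends of $e_1$ lie in $U$ and both ends of $e_2$ lie in $W$. A nonremovable edge $e\notin\{e_1,e_2\}$ of $G$ is of type II if $e$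 is nonremovable in $H$. Type II decomposition: let $e=uw$ be of type II with $u\in U$, $w\in W$. There is an edge $e^*$ of $G-e$ that is nonadmissible both in $G-e$ and in $H-e$; fix such $e^*$ and an inclusion-maximal barrier $B$ of $G-e$ containing both ends of $e^*$. Every component of $G-e-B$ with more than one vertex contains $e_1$ or $e_2$, so there are at most two such components; let $\omega\in\{0,1,2\}$ be their number. Let $U_1=B\cap U$, $W_2=B\cap W$, and let $U_2$ (resp. $W_1$) be the set of vertices of $U$ (resp. $W$) forming single-vertex components of $G-e-B$. Define subgraphs $G_1,G_2$: if $\omega=2$, $G_1$ is the nontrivial component containing $e_2$ and $G_2$ the one containing $e_1$; if $\omega=1$, the unique nontrivial component is $G_2$ (and $G_1$ is empty) when $|U_1|=|W_1|$, and is $G_1$ (and $G_2$ is empty) otherwise; if $\omega=0$ both are empty. Set $U_3=V(G_1)\cap U$, $W_3=V(G_1)\cap W$, $U_4=V(G_2)\cap U$, $W_4=V(G_2)\cap W$. *)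

theory Defs
  imports Main
begin

text \<open>Finite multigraphs (multiple edges allowed, no loops): a vertex set V, an edge set E,
and an end-point map ends assigning each edge its two-element set of ends.
Subgraphs obtained by deleting edges/vertices share the same ends map.\<close>

definition graph :: "'v set \<Rightarrow> 'e set \<Rightarrow> ('e \<Rightarrow> 'v set) \<Rightarrow> bool" where
  "graph V E ends \<longleftrightarrow> finite V \<and> finite E \<and> (\<forall>f\<in>E. ends f \<subseteq> V \<and> card (ends f) = 2)"

definition perfect_matching :: "'v set \<Rightarrow> 'e set \<Rightarrow> ('e \<Rightarrow> 'v set) \<Rightarrow> 'e set \<Rightarrow> bool" where
  "perfect_matching V E ends M \<longleftrightarrow> M \<subseteq> E \<and> (\<forall>v\<in>V. \<exists>!f. f \<in> M \<and> v \<in> ends f)"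

definition admissible :: "'v set \<Rightarrow> 'e set \<Rightarrow> ('e \<Rightarrow> 'v set) \<Rightarrow> 'e \<Rightarrow> bool" where
  "admissible V E ends f \<longleftrightarrow> (\<exists>M. perfect_matching V E ends M \<and> f \<in> M)"

definition adj :: "'v set \<Rightarrow> 'e set \<Rightarrow> ('e \<Rightarrow> 'v set) \<Rightarrow> 'v \<Rightarrow> 'v \<Rightarrow> bool" where
  "adj V E ends x y \<longleftrightarrow> x \<in> V \<and> y \<in> V \<and> (\<exists>f\<in>E. ends f = {x, y})"

definition reach :: "'v set \<Rightarrow> 'e set \<Rightarrow> ('e \<Rightarrow> 'v set) \<Rightarrow> 'v \<Rightarrow> 'v \<Rightarrow> bool" where
  "reach V E ends x y \<longleftrightarrow> x \<in> V \<and> (adj V E ends)\<^sup>*\<^sup>* x y"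

definition connected_graph :: "'v set \<Rightarrow> 'e set \<Rightarrow> ('e \<Rightarrow> 'v set) \<Rightarrow> bool" where
  "connected_graph V E ends \<longleftrightarrow> (\<forall>x\<in>V. \<forall>y\<in>V. reach V E ends x y)"

definition matching_covered :: "'v set \<Rightarrow> 'e set \<Rightarrow> ('e \<Rightarrow> 'v set) \<Rightarrow> bool" where
  "matching_covered V E ends \<longleftrightarrow> graph V E ends \<and> connected_graph V E ends \<and> card V \<ge> 2
     \<and> (\<forall>f\<in>E. admissible V E ends f)"

definition removable :: "'v set \<Rightarrow> 'e set \<Rightarrow> ('e \<Rightarrow> 'v set) \<Rightarrow> 'e \<Rightarrow> bool" where
  "removable V E ends f \<longleftrightarrow> matching_covered V (E - {f}) ends"

definition vdel :: "'e set \<Rightarrow> ('e \<Rightarrow> 'v set) \<Rightarrow> 'v set \<Rightarrow> 'e set" where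
  "vdel E ends X = {f \<in> E. ends f \<inter> X = {}}"

definition bipartite_with :: "'v set \<Rightarrow> 'e set \<Rightarrow> ('e \<Rightarrow> 'v set) \<Rightarrow> 'v set \<Rightarrow> 'v set \<Rightarrow> bool" where
  "bipartite_with V E ends U W \<longleftrightarrow> U \<union> W = V \<and> U \<inter> W = {}
     \<and> (\<forall>f\<in>E. \<exists>u\<in>U. \<exists>w\<in>W. ends f = {u, w})"

definition bipartite :: "'v set \<Rightarrow> 'e set \<Rightarrow> ('e \<Rightarrow> 'v set) \<Rightarrow> bool" where
  "bipartite V E ends \<longleftrightarrow> (\<exists>U W. bipartite_with V E ends U W)"

definition three_connected :: "'v set \<Rightarrow> 'e set \<Rightarrow> ('e \<Rightarrow> 'v set) \<Rightarrow> bool" where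
  "three_connected V E ends \<longleftrightarrow> graph V E ends \<and> card V \<ge> 4
     \<and> (\<forall>X. X \<subseteq> V \<and> card X \<le> 2 \<longrightarrow> connected_graph (V - X) (vdel E ends X) ends)"

definition brick :: "'v set \<Rightarrow> 'e set \<Rightarrow> ('e \<Rightarrow> 'v set) \<Rightarrow> bool" where
  "brick V E ends \<longleftrightarrow> three_connected V E ends \<and> \<not> bipartite V E ends
     \<and> (\<forall>x\<in>V. \<forall>y\<in>V. x \<noteq> y \<longrightarrow>
          (\<exists>M. perfect_matching (V - {x, y}) (vdel E ends {x, y}) ends M))"

definition components :: "'v set \<Rightarrow> 'e set \<Rightarrow> ('e \<Rightarrow> 'v set) \<Rightarrow> 'v set set" where
  "components V E ends = {{y. reach V E ends x y} | x. x \<in> V}"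

definition barrier :: "'v set \<Rightarrow> 'e set \<Rightarrow> ('e \<Rightarrow> 'v set) \<Rightarrow> 'v set \<Rightarrow> bool" where
  "barrier V E ends B \<longleftrightarrow> B \<noteq> {} \<and> B \<subseteq> V \<and>
     card {C \<in> components (V - B) (vdel E ends B) ends. odd (card C)} = card B"

definition edges_between :: "'e set \<Rightarrow> ('e \<Rightarrow> 'v set) \<Rightarrow> 'v set \<Rightarrow> 'v set \<Rightarrow> 'e set" where
  "edges_between E ends X Y = {f \<in> E. \<exists>x\<in>X. \<exists>y\<in>Y. ends f = {x, y}}"

end

theory Submission
  imports Defs
begin

lemma card2_eq: "card A = 2 \<Longrightarrow> x \<in> A \<Longrightarrow> y \<in> A \<Longrightarrow> z \<in> A \<Longrightarrow> x \<noteq> y \<Longrightarrow> x \<noteq> z \<Longrightarrow> y = z"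
  by (auto simp: card_Suc_eq numeral_2_eq_2)

lemma card2_obtain: "card A = 2 \<Longrightarrow> \<exists>p q. p \<noteq> q \<and> A = {p, q}"
  by (auto simp: card_Suc_eq numeral_2_eq_2)

lemma sum_match:
  fixes c :: "'v \<Rightarrow> 'a::comm_monoid_add"
  assumes "finite P" "finite K" "\<forall>v\<in>K. \<exists>!f. f \<in> P \<and> v \<in> ends f"
  shows "(\<Sum>v\<in>K. c v) = (\<Sum>f\<in>P. \<Sum>v\<in>ends f \<inter> K. c v)"
proof -
  have "(\<Sum>f\<in>P. \<Sum>v\<in>ends f \<inter> K. c v) = (\<Sum>f\<in>P. \<Sum>v\<in>K. if v \<in> ends f then c v else 0)"
  proof (rule sum.cong[OF refl])
    fix f assume "f \<in> P"
    have e: "ends f \<inter> K = {v \<in> K. v \<in> ends f}" by blast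
    show "(\<Sum>v\<in>ends f \<inter> K. c v) = (\<Sum>v\<in>K. if v \<in> ends f then c v else 0)"
      unfolding e by (rule sum.inter_filter[OF assms(2)])
  qed
  also have "\<dots> = (\<Sum>v\<in>K. \<Sum>f\<in>P. if v \<in> ends f then c v else 0)"
    by (rule sum.swap)
  also have "\<dots> = (\<Sum>v\<in>K. c v)"
  proof (rule sum.cong[OF refl])
    fix v assume v: "v \<in> K"
    have "\<exists>!f. f \<in> P \<and> v \<in> ends f" using assms(3) v by (rule bspec)
    then obtain f0 where f0a: "f0 \<in> P \<and> v \<in> ends f0" and f0b: "\<forall>y. y \<in> P \<and> v \<in> ends y \<longrightarrow> y = f0"
      by (rule ex1E)
    have f0: "f0 \<in> P" "v \<in> ends f0" "\<And>f. f \<in> P \<and> v \<in> ends f \<Longrightarrow> f = f0"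
      using f0a f0b by blast+
    have "(\<Sum>f\<in>P. if v \<in> ends f then c v else 0) = (\<Sum>f\<in>{f0}. if v \<in> ends f then c v else 0)"
    proof (rule sum.mono_neutral_right[OF assms(1)])
      show "{f0} \<subseteq> P" using f0(1) by simp
      show "\<forall>i\<in>P - {f0}. (if v \<in> ends i then c v else 0) = 0"
      proof
        fix i assume i: "i \<in> P - {f0}"
        then have "v \<notin> ends i" using f0(3)[of i] by blast
        then show "(if v \<in> ends i then c v else 0) = 0" by simp
      qed
    qed
    then show "(\<Sum>f\<in>P. if v \<in> ends f then c v else 0) = c v" using f0(2) by simp
  qed
  finally show ?thesis by simp
qed

lemma rt_sym:
  assumes "(adj A F ends)\<^sup>*\<^sup>* x y" shows "(adj A F ends)\<^sup>*\<^sup>* y x"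
  using assms
proof (induction rule: rtranclp_induct)
  case base then show ?case by simp
next
  case (step y z)
  have "adj A F ends z y" using step(2) unfolding adj_def by (auto simp: insert_commute)
  then show ?case using step(3) by (rule converse_rtranclp_into_rtranclp)
qed

lemma rt_in:
  assumes "(adj A F ends)\<^sup>*\<^sup>* x y" "x \<in> A" shows "y \<in> A"
  using assms by (induction rule: rtranclp_induct) (auto simp: adj_def)

locale S =
  fixes V :: "'v set" and E :: "'e set" and ends :: "'e \<Rightarrow> 'v set"
    and e1 e2 e es :: 'e and U W B C1 C2 :: "'v set" and u w :: 'v
  assumes G: "graph V E ends"
    and tc: "three_connected V E ends"
    and bicrit: "\<forall>x\<in>V. \<forall>y\<in>V. x \<noteq> y \<longrightarrow> (\<exists>M. perfect_matching (V - {x, y}) (vdel E ends {x, y}) ends M)"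
    and e12: "e1 \<in> E" "e2 \<in> E" "e1 \<noteq> e2"
    and H_mc: "matching_covered V (E - {e1, e2}) ends"
    and H_bip: "bipartite_with V (E - {e1, e2}) ends U W"
    and e1U: "ends e1 \<subseteq> U" and e2W: "ends e2 \<subseteq> W"
    and eE: "e \<in> E - {e1, e2}"
    and uw: "u \<in> U" "w \<in> W" "ends e = {u, w}"
    and es: "es \<in> E - {e1, e2, e}"
    and B_bar: "barrier V (E - {e}) ends B" and esB: "ends es \<subseteq> B"
    and C1: "C1 \<in> components (V - B) (vdel (E - {e}) ends B) ends" "card C1 > 1"
    and C2: "C2 \<in> components (V - B) (vdel (E - {e}) ends B) ends" "card C2 > 1"
    and C12: "C1 \<noteq> C2"
    and omega2: "\<forall>C \<in> components (V - B) (vdel (E - {e}) ends B) ends. card C > 1 \<longrightarrow> C = C1 \<or> C = C2"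
    and e2C1: "ends e2 \<subseteq> C1" and e1C2: "ends e1 \<subseteq> C2"
begin

abbreviation "EE \<equiv> vdel (E - {e}) ends B"
abbreviation "CS \<equiv> components (V - B) EE ends"
abbreviation "RR x y \<equiv> reach (V - B) EE ends x y"

lemma finV: "finite V" and finE: "finite E" using G unfolding graph_def by auto

lemma ends_props: "f \<in> E \<Longrightarrow> ends f \<subseteq> V \<and> card (ends f) = 2 \<and> finite (ends f)"
  using G unfolding graph_def by (auto intro: card_ge_0_finite)

lemma UW: "U \<union> W = V" "U \<inter> W = {}" using H_bip unfolding bipartite_with_def by auto

lemma Hedge: "f \<in> E - {e1, e2} \<Longrightarrow> \<exists>p\<in>U. \<exists>q\<in>W. ends f = {p, q}"
  using H_bip unfolding bipartite_with_def by auto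

lemma u_ne_w: "u \<noteq> w" using uw UW by auto

lemma BV: "B \<subseteq> V" using B_bar unfolding barrier_def by auto

lemma CS_iff: "K \<in> CS \<longleftrightarrow> (\<exists>x\<in>V - B. K = {y. RR x y})"
  unfolding components_def by auto

lemma RR_trans: "RR x y \<Longrightarrow> RR y z \<Longrightarrow> RR x z"
  unfolding reach_def by auto

lemma RR_sym: "RR x y \<Longrightarrow> RR y x"
  unfolding reach_def using rt_sym rt_in by metis

lemma RR_in: "RR x y \<Longrightarrow> y \<in> V - B"
  unfolding reach_def using rt_in by metis

lemma comp_mem: "K \<in> CS \<Longrightarrow> y \<in> K \<Longrightarrow> K = {z. RR y z}"
  unfolding CS_iff using RR_trans RR_sym by blast

lemma CS_sub: "K \<in> CS \<Longrightarrow> K \<subseteq> V - B"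
  unfolding CS_iff using RR_in by blast

lemma CS_fin: "K \<in> CS \<Longrightarrow> finite K"
  using CS_sub finV by (meson finite_Diff finite_subset)

lemma CS_ne: "K \<in> CS \<Longrightarrow> K \<noteq> {}"
  unfolding CS_iff reach_def by auto

lemma CS_disj: "K \<in> CS \<Longrightarrow> K' \<in> CS \<Longrightarrow> y \<in> K \<Longrightarrow> y \<in> K' \<Longrightarrow> K = K'"
  using comp_mem by metis

lemma comp_ex: "x \<in> V - B \<Longrightarrow> \<exists>K\<in>CS. x \<in> K"
proof -
  assume x: "x \<in> V - B"
  have "{y. RR x y} \<in> CS" using CS_iff x by blast
  moreover have "x \<in> {y. RR x y}" unfolding reach_def using x by auto
  ultimately show ?thesis by blast
qed

lemma finite_CS: "finite CS"
proof -
  have "CS \<subseteq> Pow (V - B)" using CS_sub by blast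
  then show ?thesis using finV by (meson finite_Diff finite_Pow_iff finite_subset)
qed

lemma closed:
  assumes K: "K \<in> CS" and f: "f \<in> E" "f \<noteq> e" and pq: "p \<in> ends f" "q \<in> ends f" "p \<in> K" "q \<notin> B"
  shows "q \<in> K"
proof (cases "p = q")
  case True then show ?thesis using pq by simp
next
  case False
  have c2: "card (ends f) = 2" and fV: "ends f \<subseteq> V" using ends_props f by auto
  then obtain a b where ab: "a \<noteq> b" "ends f = {a, b}" using card2_obtain by blast
  have fpq: "ends f = {p, q}" using ab pq False by auto
  have pVB: "p \<in> V - B" using CS_sub K pq by blast
  have qVB: "q \<in> V - B" using fV pq by blast
  have "f \<in> EE" unfolding vdel_def using f fpq pVB qVB by auto
  then have "adj (V - B) EE ends p q" unfolding adj_def using pVB qVB fpq by blast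
  then have "RR p q" unfolding reach_def using pVB by auto
  then show ?thesis using comp_mem[OF K pq(3)] by blast
qed

lemma partition: "v \<in> V - B \<Longrightarrow> v \<in> C1 \<or> v \<in> C2 \<or> {v} \<in> CS"
proof -
  assume v: "v \<in> V - B"
  then obtain K where K: "K \<in> CS" "v \<in> K" using comp_ex by blast
  show ?thesis
  proof (cases "card K > 1")
    case True then show ?thesis using omega2 K by blast
  next
    case False
    then have "card K \<le> 1" by simp
    then have "K = {v}" using K CS_fin[OF K(1)] by (metis card_1_singletonE card_0_eq empty_iff le_eq_less_or_eq less_one singletonD)
    then show ?thesis using K by simp
  qed
qed

lemma C12_disj: "C1 \<inter> C2 = {}" using CS_disj C1 C2 C12 by blast

end


context S begin

abbreviation col :: "'v \<Rightarrow> int" where "col v \<equiv> (if v \<in> W then 1 else -1)"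

definition bd :: "'e set \<Rightarrow> 'v set \<Rightarrow> 'e set" where
  "bd P K = {f \<in> P. ends f \<inter> K \<noteq> {} \<and> \<not> ends f \<subseteq> K}"

lemma edge_col:
  assumes "f \<in> E"
  shows "(\<Sum>v\<in>ends f. col v) = (if f = e2 then 2 else if f = e1 then -2 else 0)"
proof -
  have c2: "card (ends f) = 2" using ends_props assms by auto
  then obtain a b where ab: "a \<noteq> b" "ends f = {a, b}" using card2_obtain by blast
  show ?thesis
  proof (cases "f = e2")
    case True
    then have "a \<in> W" "b \<in> W" using e2W ab by auto
    then show ?thesis using ab True by simp
  next
    case False
    show ?thesis
    proof (cases "f = e1")
      case True
      then have "a \<in> U" "b \<in> U" using e1U ab by auto
      then have "a \<notin> W" "b \<notin> W" using UW by auto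
      then show ?thesis using ab True e12 by simp
    next
      case False2: False
      then obtain p q where pq: "p \<in> U" "q \<in> W" "ends f = {p, q}" using Hedge assms False by blast
      have "p \<notin> W" using pq UW by auto
      then have "p \<noteq> q" using pq by auto
      then show ?thesis using pq \<open>p \<notin> W\<close> False False2 by simp
    qed
  qed
qed

lemma d_formula:
  assumes PE: "P \<subseteq> E" and KV: "K \<subseteq> V" and cov: "\<forall>v\<in>K. \<exists>!f. f \<in> P \<and> v \<in> ends f"
  shows "(\<Sum>v\<in>K. col v) = (if e2 \<in> P \<and> ends e2 \<subseteq> K then 2 else 0) - (if e1 \<in> P \<and> ends e1 \<subseteq> K then 2 else 0)
            + (\<Sum>f\<in>bd P K. \<Sum>v\<in>ends f \<inter> K. col v)"
proof -
  have finP: "finite P" using PE finE finite_subset by blast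
  have finK: "finite K" using KV finV finite_subset by blast
  define g where "g f = (\<Sum>v\<in>ends f \<inter> K. col v)" for f
  have "(\<Sum>v\<in>K. col v) = (\<Sum>f\<in>P. g f)" unfolding g_def by (rule sum_match[OF finP finK cov])
  also have "\<dots> = (\<Sum>f\<in>P. (if ends f \<subseteq> K then g f else 0) + (if f \<in> bd P K then g f else 0))"
  proof (rule sum.cong[OF refl])
    fix f assume f: "f \<in> P"
    show "g f = (if ends f \<subseteq> K then g f else 0) + (if f \<in> bd P K then g f else 0)"
    proof (cases "ends f \<inter> K = {}")
      case True then show ?thesis unfolding g_def bd_def by auto
    next
      case False then show ?thesis unfolding bd_def using f by auto
    qed
  qed
  also have "\<dots> = (\<Sum>f\<in>P. if ends f \<subseteq> K then g f else 0) + (\<Sum>f\<in>P. if f \<in> bd P K then g f else 0)"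
    by (rule sum.distrib)
  also have "(\<Sum>f\<in>P. if f \<in> bd P K then g f else 0) = (\<Sum>f\<in>bd P K. g f)"
  proof -
    have "bd P K = {f \<in> P. f \<in> bd P K}" unfolding bd_def by blast
    then show ?thesis using sum.inter_filter[OF finP, of g "\<lambda>f. f \<in> bd P K"] by simp
  qed
  also have "(\<Sum>f\<in>P. if ends f \<subseteq> K then g f else 0)
      = (\<Sum>f\<in>P. (if f = e2 then (if ends e2 \<subseteq> K then 2 else 0) else 0) + (if f = e1 then (if ends e1 \<subseteq> K then -2 else 0) else 0))"
  proof (rule sum.cong[OF refl])
    fix f assume f: "f \<in> P"
    then have fE: "f \<in> E" using PE by blast
    show "(if ends f \<subseteq> K then g f else 0) = (if f = e2 then (if ends e2 \<subseteq> K then 2 else 0) else 0) + (if f = e1 then (if ends e1 \<subseteq> K then -2 else 0) else 0)"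
    proof (cases "ends f \<subseteq> K")
      case True
      then have "g f = (\<Sum>v\<in>ends f. col v)" unfolding g_def by (simp add: Int_absorb2)
      then show ?thesis using edge_col[OF fE] True e12(3) by auto
    next
      case False then show ?thesis using e12(3) by auto
    qed
  qed
  also have "\<dots> = (\<Sum>f\<in>P. if f = e2 then (if ends e2 \<subseteq> K then 2 else 0) else 0) + (\<Sum>f\<in>P. if f = e1 then (if ends e1 \<subseteq> K then -2 else 0) else 0)"
    by (rule sum.distrib)
  also have "\<dots> = (if e2 \<in> P \<and> ends e2 \<subseteq> K then 2 else 0) - (if e1 \<in> P \<and> ends e1 \<subseteq> K then 2 else 0)"
    using sum.delta[OF finP, of e2 "\<lambda>_. (if ends e2 \<subseteq> K then 2 else 0)::int"]
          sum.delta[OF finP, of e1 "\<lambda>_. (if ends e1 \<subseteq> K then -2 else 0)::int"] by auto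
  finally show ?thesis unfolding g_def by simp
qed

lemma odd_bd:
  assumes PE: "P \<subseteq> E" and KV: "K \<subseteq> V" and cov: "\<forall>v\<in>K. \<exists>!f. f \<in> P \<and> v \<in> ends f"
    and odd: "odd (card K)"
  shows "bd P K \<noteq> {}"
proof
  assume bd0: "bd P K = {}"
  have finP: "finite P" using PE finE finite_subset by blast
  have finK: "finite K" using KV finV finite_subset by blast
  have "(\<Sum>v\<in>K. (1::nat)) = (\<Sum>f\<in>P. \<Sum>v\<in>ends f \<inter> K. 1)" by (rule sum_match[OF finP finK cov])
  then have ck: "card K = (\<Sum>f\<in>P. card (ends f \<inter> K))" by simp
  have "\<forall>f\<in>P. 2 dvd card (ends f \<inter> K)"
  proof
    fix f assume f: "f \<in> P"
    then have "f \<notin> bd P K" using bd0 by blast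
    then have "ends f \<inter> K = {} \<or> ends f \<subseteq> K" using f unfolding bd_def by blast
    moreover have "card (ends f) = 2" using ends_props f PE by blast
    ultimately show "2 dvd card (ends f \<inter> K)" by (auto simp: Int_absorb2)
  qed
  then have "2 dvd card K" unfolding ck by (intro dvd_sum) blast
  then show False using odd by simp
qed

end

context S begin

lemma bd_sub: "bd P K \<subseteq> P" unfolding bd_def by blast

lemma bd_Bend:
  assumes K: "K \<in> CS" and PE: "P \<subseteq> E" and f: "f \<in> bd P K" "f \<noteq> e"
  shows "\<exists>b\<in>B. b \<in> ends f"
proof -
  obtain p where p: "p \<in> ends f" "p \<in> K" using f unfolding bd_def by blast
  obtain q where q: "q \<in> ends f" "q \<notin> K" using f unfolding bd_def by blast
  have fE: "f \<in> E" using f PE unfolding bd_def by blast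
  show ?thesis
  proof (rule ccontr)
    assume "\<not> ?thesis"
    then have "q \<notin> B" using q by blast
    then have "q \<in> K" using closed[OF K fE f(2) p(1) q(1) p(2)] by blast
    then show False using q by blast
  qed
qed

lemma shared:
  assumes K: "K \<in> CS" and K': "K' \<in> CS" and PE: "P \<subseteq> E"
    and f: "f \<in> bd P K" "f \<in> bd P K'" and b: "b \<in> B" "b \<in> ends f"
  shows "K = K'"
proof -
  obtain p where p: "p \<in> ends f" "p \<in> K" using f unfolding bd_def by blast
  obtain p' where p': "p' \<in> ends f" "p' \<in> K'" using f unfolding bd_def by blast
  have "p \<notin> B" "p' \<notin> B" using CS_sub K K' p p' by blast+
  have fE: "f \<in> E" using f PE unfolding bd_def by blast
  have "card (ends f) = 2" using ends_props fE by blast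
  then have "p = p'" using card2_eq[of "ends f" b p p'] b p p' \<open>p \<notin> B\<close> \<open>p' \<notin> B\<close> by metis
  then show ?thesis using CS_disj K K' p p' by blast
qed

lemma struct:
  assumes PE: "P \<subseteq> E"
    and cov: "\<forall>v\<in>V - B. \<exists>!f. f \<in> P \<and> v \<in> ends f"
    and uniqB: "\<forall>b\<in>B. \<forall>f\<in>P. \<forall>f'\<in>P. b \<in> ends f \<longrightarrow> b \<in> ends f' \<longrightarrow> f = f'"
    and xy: "x \<in> B" "y \<in> B" "x \<noteq> y" "\<forall>f\<in>P. x \<in> ends f \<longrightarrow> ends f \<subseteq> B" "\<forall>f\<in>P. y \<in> ends f \<longrightarrow> ends f \<subseteq> B"
  shows "e \<in> P \<and> u \<notin> B \<and> w \<notin> B \<and> (\<forall>K\<in>CS. (u \<in> K \<longrightarrow> w \<notin> K \<and> bd P K = {e})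
           \<and> (w \<in> K \<longrightarrow> u \<notin> K \<and> bd P K = {e})
           \<and> (u \<notin> K \<and> w \<notin> K \<longrightarrow> (odd (card K) \<longrightarrow> (\<exists>f. f \<noteq> e \<and> bd P K = {f})) \<and> (even (card K) \<longrightarrow> bd P K = {})))"
proof -
  define OC where "OC = {K \<in> CS. odd (card K)}"
  have finB: "finite B" using BV finV finite_subset by blast
  have cardOC: "card OC = card B" using B_bar unfolding barrier_def OC_def by simp
  have finOC: "finite OC" unfolding OC_def using finite_CS by simp
  have OC_CS: "OC \<subseteq> CS" unfolding OC_def by blast
  have covK: "\<forall>v\<in>K. \<exists>!f. f \<in> P \<and> v \<in> ends f" if "K \<in> CS" for K
    using cov CS_sub[OF that] by blast
  have bdne: "bd P K \<noteq> {}" if "K \<in> OC" for K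
  proof -
    have K: "K \<in> CS" "odd (card K)" using that unfolding OC_def by auto
    show ?thesis using odd_bd[OF PE _ covK[OF K(1)] K(2)] CS_sub[OF K(1)] by blast
  qed
  define BC where "BC = {b \<in> B. \<exists>f\<in>P. b \<in> ends f \<and> \<not> ends f \<subseteq> B}"
  have BCsub: "BC \<subseteq> B - {x, y}" unfolding BC_def using xy by blast
  have cardBC: "card BC \<le> card B - 2"
  proof -
    have "card BC \<le> card (B - {x, y})" using BCsub finB by (intro card_mono) auto
    also have "card (B - {x, y}) = card B - 2" using xy finB by (simp add: card_Diff_subset)
    finally show ?thesis .
  qed
  have cardB2: "card B \<ge> 2"
  proof -
    have "card {x, y} \<le> card B" using xy finB by (intro card_mono) auto
    then show ?thesis using xy by simp
  qed
  define pick where "pick K = (if \<exists>f\<in>bd P K. f \<noteq> e then (SOME b. b \<in> B \<and> (\<exists>f\<in>bd P K. f \<noteq> e \<and> b \<in> ends f))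
      else (SOME v. v \<in> ends e \<inter> K))" for K
  have pick1: "pick K \<in> B \<and> (\<exists>f\<in>bd P K. f \<noteq> e \<and> pick K \<in> ends f)" if "K \<in> CS" "\<exists>f\<in>bd P K. f \<noteq> e" for K
  proof -
    have ex: "\<exists>b. b \<in> B \<and> (\<exists>f\<in>bd P K. f \<noteq> e \<and> b \<in> ends f)" using bd_Bend[OF that(1) PE] that(2) by blast
    have pk: "pick K = (SOME b. b \<in> B \<and> (\<exists>f\<in>bd P K. f \<noteq> e \<and> b \<in> ends f))" unfolding pick_def using that(2) by simp
    show ?thesis unfolding pk by (rule someI_ex[OF ex])
  qed
  have pick2: "e \<in> bd P K \<and> pick K \<in> ends e \<inter> K \<and> bd P K = {e}" if KO: "K \<in> OC" and nf: "\<not> (\<exists>f\<in>bd P K. f \<noteq> e)" for K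
  proof -
    have bde: "bd P K = {e}"
    proof -
      obtain f where f: "f \<in> bd P K" using bdne[OF KO] by blast
      then have "f = e" using nf by blast
      then show ?thesis using f nf by blast
    qed
    then have "ends e \<inter> K \<noteq> {}" unfolding bd_def by blast
    then have ex: "\<exists>v. v \<in> ends e \<inter> K" by blast
    have pk: "pick K = (SOME v. v \<in> ends e \<inter> K)" unfolding pick_def using nf by simp
    have "pick K \<in> ends e \<inter> K" unfolding pk by (rule someI_ex[OF ex])
    then show ?thesis using bde by blast
  qed
  have pickT: "pick K \<in> BC \<union> (ends e - B)" if "K \<in> OC" for K
  proof (cases "\<exists>f\<in>bd P K. f \<noteq> e")
    case True
    have K: "K \<in> CS" using that OC_CS by blast
    obtain f where f: "f \<in> bd P K" "pick K \<in> ends f" using pick1[OF K True] by blast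
    have "\<not> ends f \<subseteq> B" using f(1) CS_sub[OF K] unfolding bd_def by blast
    then show ?thesis unfolding BC_def using pick1[OF K True] f bd_sub by blast
  next
    case False
    have K: "K \<in> CS" using that OC_CS by blast
    show ?thesis using pick2[OF that False] CS_sub[OF K] by blast
  qed
  have pickB: "\<exists>f\<in>bd P K. pick K \<in> ends f" if "K \<in> OC" "pick K \<in> B" for K
  proof (cases "\<exists>f\<in>bd P K. f \<noteq> e")
    case True then show ?thesis using pick1 that OC_CS by blast
  next
    case False
    have K: "K \<in> CS" using that OC_CS by blast
    then show ?thesis using pick2[OF that(1) False] CS_sub[OF K] that(2) by blast
  qed
  have pickNB: "pick K \<in> K \<and> bd P K = {e}" if "K \<in> OC" "pick K \<notin> B" for K
  proof (cases "\<exists>f\<in>bd P K. f \<noteq> e")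
    case True then show ?thesis using pick1 that OC_CS by blast
  next
    case False then show ?thesis using pick2[OF that(1) False] by blast
  qed
  have inj: "inj_on pick OC"
  proof (rule inj_onI)
    fix K K' assume K: "K \<in> OC" and K': "K' \<in> OC" and eq: "pick K = pick K'"
    have KC: "K \<in> CS" "K' \<in> CS" using K K' OC_CS by blast+
    show "K = K'"
    proof (cases "pick K \<in> B")
      case True
      obtain f where f: "f \<in> bd P K" "pick K \<in> ends f" using pickB[OF K True] by blast
      obtain f' where f': "f' \<in> bd P K'" "pick K' \<in> ends f'" using pickB[OF K'] True eq by auto
      have fP: "f \<in> P" "f' \<in> P" using f(1) f'(1) bd_sub by blast+
      have "pick K \<in> ends f'" using f'(2) eq by simp
      then have "f = f'" using uniqB[rule_format, OF True fP f(2)] by blast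
      then show ?thesis using shared[OF KC PE f(1)] f' True f(2) by blast
    next
      case False
      have "pick K \<in> K" using pickNB[OF K False] by blast
      moreover have "pick K' \<in> K'" using pickNB[OF K'] False eq by auto
      ultimately show ?thesis using CS_disj[OF KC] eq by metis
    qed
  qed
  define T where "T = BC \<union> (ends e - B)"
  have imgT: "pick ` OC \<subseteq> T" unfolding T_def using pickT by blast
  have finT: "finite T" unfolding T_def BC_def using finB ends_props eE by auto
  have cimg: "card (pick ` OC) = card B" using card_image[OF inj] cardOC by simp
  have ceB: "card (ends e - B) \<le> 2" using ends_props eE by (metis Diff_subset card_mono DiffD1)
  have "card B \<le> card T" using card_mono[OF finT imgT] cimg by simp
  also have "card T \<le> card BC + card (ends e - B)" unfolding T_def by (rule card_Un_le)
  finally have c1: "card B \<le> card BC + card (ends e - B)" .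
  then have ce2: "card (ends e - B) = 2" using cardBC ceB cardB2 by linarith
  have ep: "card (ends e) = 2" "finite (ends e)" using ends_props eE by auto
  have "ends e - B = ends e"
    using card_subset_eq[OF ep(2) Diff_subset[of "ends e" B]] ce2 ep(1) by simp
  then have uwB: "u \<notin> B" "w \<notin> B" using uw by auto
  have "card T \<le> card (pick ` OC)" using \<open>card T \<le> card BC + card (ends e - B)\<close> ce2 cardBC cardB2 cimg by linarith
  then have imgeq: "pick ` OC = T" using card_subset_eq[OF finT imgT] card_mono[OF finT imgT] by linarith
  have "u \<in> T" "w \<in> T" unfolding T_def using uwB uw by auto
  then have "u \<in> pick ` OC" "w \<in> pick ` OC" using imgeq by auto
  then obtain Ku Kw where Ku: "Ku \<in> OC" "pick Ku = u" and Kw: "Kw \<in> OC" "pick Kw = w" by (metis imageE)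
  have Ku2: "u \<in> Ku" "bd P Ku = {e}" using pickNB[OF Ku(1)] Ku(2) uwB by auto
  have Kw2: "w \<in> Kw" "bd P Kw = {e}" using pickNB[OF Kw(1)] Kw(2) uwB by auto
  have eP: "e \<in> P" using Ku2 bd_sub by blast
  have KuC: "Ku \<in> CS" "Kw \<in> CS" using Ku Kw OC_CS by blast+
  have main: "(u \<in> K \<longrightarrow> w \<notin> K \<and> bd P K = {e})
           \<and> (w \<in> K \<longrightarrow> u \<notin> K \<and> bd P K = {e})
           \<and> (u \<notin> K \<and> w \<notin> K \<longrightarrow> (odd (card K) \<longrightarrow> (\<exists>f. f \<noteq> e \<and> bd P K = {f})) \<and> (even (card K) \<longrightarrow> bd P K = {}))"
    if K: "K \<in> CS" for K
  proof -
    have A1: "u \<in> K \<longrightarrow> w \<notin> K \<and> bd P K = {e}"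
    proof
      assume uK: "u \<in> K"
      then have "K = Ku" using CS_disj K KuC Ku2 by blast
      then have bb: "bd P K = {e}" using Ku2 by simp
      then have "\<not> ends e \<subseteq> K" unfolding bd_def by blast
      then have "w \<notin> K" using uK uw by auto
      then show "w \<notin> K \<and> bd P K = {e}" using bb by simp
    qed
    have A2: "w \<in> K \<longrightarrow> u \<notin> K \<and> bd P K = {e}"
    proof
      assume wK: "w \<in> K"
      then have "K = Kw" using CS_disj K KuC Kw2 by blast
      then have bb: "bd P K = {e}" using Kw2 by simp
      then have "\<not> ends e \<subseteq> K" unfolding bd_def by blast
      then have "u \<notin> K" using wK uw by auto
      then show "u \<notin> K \<and> bd P K = {e}" using bb by simp
    qed
    have A3: "u \<notin> K \<and> w \<notin> K \<longrightarrow> (odd (card K) \<longrightarrow> (\<exists>f. f \<noteq> e \<and> bd P K = {f})) \<and> (even (card K) \<longrightarrow> bd P K = {})"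
    proof
    assume nuw: "u \<notin> K \<and> w \<notin> K"
    have key: "K \<in> OC \<and> (\<exists>b\<in>B. b \<in> ends f \<and> pick K = b)" if f: "f \<in> bd P K" for f
    proof -
      have fne: "f \<noteq> e" using f nuw uw unfolding bd_def by auto
      obtain b where b: "b \<in> B" "b \<in> ends f" using bd_Bend[OF K PE f fne] by blast
      have "\<not> ends f \<subseteq> B" using f CS_sub[OF K] unfolding bd_def by blast
      then have "b \<in> BC" unfolding BC_def using b f bd_sub by blast
      then have "b \<in> T" unfolding T_def by blast
      then have "b \<in> pick ` OC" using imgeq by simp
      then obtain K' where K': "K' \<in> OC" "pick K' = b" by (metis imageE)
      have "pick K' \<in> B" using K'(2) b(1) by simp
      then obtain f' where f'0: "f' \<in> bd P K'" "pick K' \<in> ends f'" using pickB[OF K'(1)] by blast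
      then have f': "f' \<in> bd P K'" "b \<in> ends f'" using K'(2) by auto
      have fP: "f \<in> P" "f' \<in> P" using f f'(1) bd_sub by blast+
      have "f' = f" using uniqB[rule_format, OF b(1) fP(2) fP(1) f'(2) b(2)] .
      then have "K' = K" using shared[OF _ K PE _ f b] f' K' OC_CS by blast
      then show ?thesis using K' b by blast
    qed
    have O1: "odd (card K) \<longrightarrow> (\<exists>f. f \<noteq> e \<and> bd P K = {f})"
    proof
      assume oK: "odd (card K)"
      then have KO: "K \<in> OC" unfolding OC_def using K by blast
      obtain f where f: "f \<in> bd P K" using bdne[OF KO] by blast
      have fne: "f \<noteq> e" using f nuw uw unfolding bd_def by auto
      have "bd P K = {f}"
      proof
        show "{f} \<subseteq> bd P K" using f by blast
        show "bd P K \<subseteq> {f}"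
        proof
          fix g assume g: "g \<in> bd P K"
          obtain b where b: "b \<in> B" "b \<in> ends f" "pick K = b" using key[OF f] by blast
          obtain b' where b': "b' \<in> B" "b' \<in> ends g" "pick K = b'" using key[OF g] by blast
          have fP: "f \<in> P" "g \<in> P" using f g bd_sub by blast+
          have "b' = b" using b b' by simp
          then have "g = f" using uniqB[rule_format, OF b(1) fP(2) fP(1)] b'(2) b(2) by blast
          then show "g \<in> {f}" by simp
        qed
      qed
      then show "\<exists>f. f \<noteq> e \<and> bd P K = {f}" using fne by blast
    qed
    have O2: "even (card K) \<longrightarrow> bd P K = {}"
    proof
      assume eK: "even (card K)"
      show "bd P K = {}"
      proof (rule ccontr)
        assume "bd P K \<noteq> {}"
        then obtain f where "f \<in> bd P K" by blast
        then have "K \<in> OC" using key by blast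
        then show False using eK unfolding OC_def by simp
      qed
    qed
    show "(odd (card K) \<longrightarrow> (\<exists>f. f \<noteq> e \<and> bd P K = {f})) \<and> (even (card K) \<longrightarrow> bd P K = {})"
      using O1 O2 by blast
    qed
    show ?thesis using A1 A2 A3 by blast
  qed
  show ?thesis using eP uwB main by blast
qed

end

context S begin

definition DF :: "'v set \<Rightarrow> int \<Rightarrow> bool" where
  "DF K r \<longleftrightarrow> (u \<in> K \<longrightarrow> r = -1) \<and> (w \<in> K \<longrightarrow> r = 1)
      \<and> (u \<notin> K \<and> w \<notin> K \<and> odd (card K) \<longrightarrow> r = 1 \<or> r = -1)
      \<and> (u \<notin> K \<and> w \<notin> K \<and> even (card K) \<longrightarrow> r = 0)"

lemma single_end:
  assumes "P \<subseteq> E" "f \<in> bd P K" shows "\<exists>p. ends f \<inter> K = {p}"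
proof -
  obtain p where p: "p \<in> ends f" "p \<in> K" using assms(2) unfolding bd_def by blast
  obtain q where q: "q \<in> ends f" "q \<notin> K" using assms(2) unfolding bd_def by blast
  have fE: "f \<in> E" using assms unfolding bd_def by blast
  have "card (ends f) = 2" using ends_props fE by blast
  then obtain a b where ab: "a \<noteq> b" "ends f = {a, b}" using card2_obtain by blast
  have "ends f = {p, q}" using ab p q by auto
  then have "ends f \<inter> K = {p}" using p q by auto
  then show ?thesis by blast
qed

lemma dval:
  assumes PE: "P \<subseteq> E"
    and cov: "\<forall>v\<in>V - B. \<exists>!f. f \<in> P \<and> v \<in> ends f"
    and uniqB: "\<forall>b\<in>B. \<forall>f\<in>P. \<forall>f'\<in>P. b \<in> ends f \<longrightarrow> b \<in> ends f' \<longrightarrow> f = f'"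
    and xy: "x \<in> B" "y \<in> B" "x \<noteq> y" "\<forall>f\<in>P. x \<in> ends f \<longrightarrow> ends f \<subseteq> B" "\<forall>f\<in>P. y \<in> ends f \<longrightarrow> ends f \<subseteq> B"
    and K: "K \<in> CS"
  shows "DF K ((\<Sum>v\<in>K. col v) - (if e2 \<in> P \<and> ends e2 \<subseteq> K then 2 else 0) + (if e1 \<in> P \<and> ends e1 \<subseteq> K then 2 else 0))"
proof -
  note st = struct[OF PE cov uniqB xy]
  have KV: "K \<subseteq> V" using CS_sub[OF K] by blast
  have covK: "\<forall>v\<in>K. \<exists>!f. f \<in> P \<and> v \<in> ends f" using cov CS_sub[OF K] by blast
  define D where "D = (\<Sum>f\<in>bd P K. \<Sum>v\<in>ends f \<inter> K. col v)"
  have eq: "(\<Sum>v\<in>K. col v) - (if e2 \<in> P \<and> ends e2 \<subseteq> K then 2 else 0) + (if e1 \<in> P \<and> ends e1 \<subseteq> K then 2 else 0) = D"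
    using d_formula[OF PE KV covK] unfolding D_def by simp
  have uW: "u \<notin> W" using uw UW by auto
  have c1: "u \<in> K \<longrightarrow> D = -1"
  proof
    assume uK: "u \<in> K"
    then have "w \<notin> K" "bd P K = {e}" using st K by blast+
    then have "ends e \<inter> K = {u}" using uK uw by auto
    then show "D = -1" unfolding D_def using \<open>bd P K = {e}\<close> uW by simp
  qed
  have c2: "w \<in> K \<longrightarrow> D = 1"
  proof
    assume wK: "w \<in> K"
    then have "u \<notin> K" "bd P K = {e}" using st K by blast+
    then have "ends e \<inter> K = {w}" using wK uw by auto
    then show "D = 1" unfolding D_def using \<open>bd P K = {e}\<close> uw by simp
  qed
  have c3: "u \<notin> K \<and> w \<notin> K \<and> odd (card K) \<longrightarrow> D = 1 \<or> D = -1"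
  proof
    assume a: "u \<notin> K \<and> w \<notin> K \<and> odd (card K)"
    then obtain f where f: "bd P K = {f}" using st K by blast
    then obtain p where p: "ends f \<inter> K = {p}" using single_end[OF PE] by blast
    show "D = 1 \<or> D = -1" unfolding D_def using f p by simp
  qed
  have c4: "u \<notin> K \<and> w \<notin> K \<and> even (card K) \<longrightarrow> D = 0"
  proof
    assume a: "u \<notin> K \<and> w \<notin> K \<and> even (card K)"
    then have "bd P K = {}" using st K by blast
    then show "D = 0" unfolding D_def by simp
  qed
  show ?thesis unfolding eq DF_def using c1 c2 c3 c4 by blast
qed

lemma tc_lemma:
  assumes y: "y \<in> V" and X: "X \<subseteq> V" "card X \<le> 2" "y \<notin> X"
    and nb: "\<forall>f\<in>E. y \<in> ends f \<longrightarrow> ends f \<subseteq> insert y X"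
  shows False
proof -
  have c4: "card V \<ge> 4" and conn: "connected_graph (V - X) (vdel E ends X) ends"
    using tc X unfolding three_connected_def by auto
  have finX: "finite X" using X finV finite_subset by blast
  have "\<not> V \<subseteq> insert y X"
  proof
    assume "V \<subseteq> insert y X"
    then have "card V \<le> card (insert y X)" using finX by (intro card_mono) auto
    also have "\<dots> \<le> 3" using X finX by (simp add: card_insert_if)
    finally show False using c4 by simp
  qed
  then obtain t where t: "t \<in> V" "t \<notin> insert y X" by blast
  have "reach (V - X) (vdel E ends X) ends y t" using conn y t X unfolding connected_graph_def by blast
  then have rt: "(adj (V - X) (vdel E ends X) ends)\<^sup>*\<^sup>* y t" unfolding reach_def by blast
  show False
  proof (cases rule: converse_rtranclpE[OF rt])
    case 1 then show False using t by simp
  next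
    case (2 z)
    then obtain f where f: "f \<in> vdel E ends X" "ends f = {y, z}" "z \<in> V - X" unfolding adj_def by blast
    have fE: "f \<in> E" using f unfolding vdel_def by blast
    then have "ends f \<subseteq> insert y X" using nb f by blast
    then have "z = y" using f by auto
    then have "card (ends f) = 1" using f by simp
    then show False using ends_props fE by simp
  qed
qed

end

context S begin

lemma ends_ne: "f \<in> E \<Longrightarrow> ends f \<noteq> {}"
  using ends_props by fastforce

lemma e1_not_C1: "\<not> ends e1 \<subseteq> C1" using e1C2 C12_disj ends_ne[OF e12(1)] by blast
lemma e2_not_C2: "\<not> ends e2 \<subseteq> C2" using e2C1 C12_disj ends_ne[OF e12(2)] by blast

lemma bicrit_hyps:
  assumes xy: "x \<in> B" "y \<in> B" "x \<noteq> y" and P: "perfect_matching (V - {x, y}) (vdel E ends {x, y}) ends P"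
  shows "P \<subseteq> E \<and> (\<forall>v\<in>V - B. \<exists>!f. f \<in> P \<and> v \<in> ends f)
    \<and> (\<forall>b\<in>B. \<forall>f\<in>P. \<forall>f'\<in>P. b \<in> ends f \<longrightarrow> b \<in> ends f' \<longrightarrow> f = f')
    \<and> (\<forall>f\<in>P. x \<in> ends f \<longrightarrow> ends f \<subseteq> B) \<and> (\<forall>f\<in>P. y \<in> ends f \<longrightarrow> ends f \<subseteq> B)"
proof -
  have PE: "P \<subseteq> vdel E ends {x, y}" and cov: "\<forall>v\<in>V - {x, y}. \<exists>!f. f \<in> P \<and> v \<in> ends f"
    using P unfolding perfect_matching_def by auto
  have avoid: "\<forall>f\<in>P. ends f \<inter> {x, y} = {}" using PE unfolding vdel_def by blast
  have A1: "P \<subseteq> E" using PE unfolding vdel_def by blast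
  have A2: "\<forall>v\<in>V - B. \<exists>!f. f \<in> P \<and> v \<in> ends f" using cov xy by blast
  have A3: "\<forall>b\<in>B. \<forall>f\<in>P. \<forall>f'\<in>P. b \<in> ends f \<longrightarrow> b \<in> ends f' \<longrightarrow> f = f'"
  proof (intro ballI impI)
    fix b f f' assume b: "b \<in> B" and f: "f \<in> P" "f' \<in> P" and bf: "b \<in> ends f" "b \<in> ends f'"
    have "b \<in> V - {x, y}" using b BV avoid f bf by blast
    then have "\<exists>!f. f \<in> P \<and> b \<in> ends f" using cov by blast
    then show "f = f'" using f bf by blast
  qed
  show ?thesis using A1 A2 A3 avoid by blast
qed

lemma sum_minus2:
  assumes "x \<in> V" "y \<in> V" "x \<noteq> y"
  shows "(\<Sum>v\<in>V - {x, y}. col v) = (\<Sum>v\<in>V. col v) - col x - col y"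
proof -
  have "(\<Sum>v\<in>V. col v) = (\<Sum>v\<in>V - {x, y}. col v) + (\<Sum>v\<in>{x, y}. col v)"
    using assms finV by (intro sum.subset_diff) auto
  then show ?thesis using assms by simp
qed

lemma balance:
  assumes xy: "x \<in> V" "y \<in> V" "x \<noteq> y" and P: "perfect_matching (V - {x, y}) (vdel E ends {x, y}) ends P"
  shows "(\<Sum>v\<in>V - {x, y}. col v) = (if e2 \<in> P then 2 else 0) - (if e1 \<in> P then 2 else 0)"
proof -
  have PE: "P \<subseteq> vdel E ends {x, y}" and cov: "\<forall>v\<in>V - {x, y}. \<exists>!f. f \<in> P \<and> v \<in> ends f"
    using P unfolding perfect_matching_def by auto
  have PE': "P \<subseteq> E" using PE unfolding vdel_def by blast
  have sub: "\<forall>f\<in>P. ends f \<subseteq> V - {x, y}" using PE ends_props unfolding vdel_def by blast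
  have bd0: "bd P (V - {x, y}) = {}" using sub unfolding bd_def by blast
  show ?thesis using d_formula[OF PE' _ cov] bd0 sub by auto
qed

lemma PH_ex: "\<exists>P. perfect_matching V (E - {e1, e2}) ends P \<and> es \<in> P"
proof -
  have "admissible V (E - {e1, e2}) ends es" using H_mc es unfolding matching_covered_def by blast
  then show ?thesis unfolding admissible_def by blast
qed

lemma es_ends: "\<exists>p q. p \<in> B \<inter> U \<and> q \<in> B \<inter> W \<and> ends es = {p, q}"
  using Hedge[of es] es esB by auto

abbreviation dd :: "'v set \<Rightarrow> int" where "dd K \<equiv> (\<Sum>v\<in>K. col v)"

lemma PH_facts: "DF C1 (dd C1) \<and> DF C2 (dd C2) \<and> dd V = 0 \<and> u \<notin> B \<and> w \<notin> B
   \<and> (\<forall>K\<in>CS. (u \<in> K \<longrightarrow> w \<notin> K) \<and> (w \<in> K \<longrightarrow> u \<notin> K))"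
proof -
  obtain P where P: "perfect_matching V (E - {e1, e2}) ends P" "es \<in> P" using PH_ex by blast
  obtain p q where pq: "p \<in> B \<inter> U" "q \<in> B \<inter> W" "ends es = {p, q}" using es_ends by blast
  have pq_ne: "p \<noteq> q" using pq UW by auto
  have PE: "P \<subseteq> E - {e1, e2}" and cov: "\<forall>v\<in>V. \<exists>!f. f \<in> P \<and> v \<in> ends f"
    using P unfolding perfect_matching_def by auto
  have PE': "P \<subseteq> E" using PE by blast
  have cov': "\<forall>v\<in>V - B. \<exists>!f. f \<in> P \<and> v \<in> ends f" using cov by blast
  have uniqB: "\<forall>b\<in>B. \<forall>f\<in>P. \<forall>f'\<in>P. b \<in> ends f \<longrightarrow> b \<in> ends f' \<longrightarrow> f = f'"
  proof (intro ballI impI)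
    fix b f f' assume b: "b \<in> B" and f: "f \<in> P" "f' \<in> P" and bf: "b \<in> ends f" "b \<in> ends f'"
    have "\<exists>!f. f \<in> P \<and> b \<in> ends f" using cov b BV by blast
    then show "f = f'" using f bf by blast
  qed
  have xc: "\<forall>f\<in>P. p \<in> ends f \<longrightarrow> ends f \<subseteq> B"
  proof (intro ballI impI)
    fix f assume f: "f \<in> P" "p \<in> ends f"
    have "f = es" using uniqB pq P(2) f by blast
    then show "ends f \<subseteq> B" using esB by simp
  qed
  have yc: "\<forall>f\<in>P. q \<in> ends f \<longrightarrow> ends f \<subseteq> B"
  proof (intro ballI impI)
    fix f assume f: "f \<in> P" "q \<in> ends f"
    have "f = es" using uniqB pq P(2) f by blast
    then show "ends f \<subseteq> B" using esB by simp
  qed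
  have pB: "p \<in> B" "q \<in> B" using pq by auto
  note hyps = PE' cov' uniqB pB pq_ne xc yc
  have n12: "e1 \<notin> P" "e2 \<notin> P" using PE by auto
  have d1: "DF C1 (dd C1)" using dval[OF hyps C1(1)] n12 by simp
  have d2: "DF C2 (dd C2)" using dval[OF hyps C2(1)] n12 by simp
  have sub: "\<forall>f\<in>P. ends f \<subseteq> V" using PE' ends_props by blast
  have bd0: "bd P V = {}" using sub unfolding bd_def by blast
  have dV: "dd V = 0" using d_formula[OF PE' _ cov] bd0 n12 by simp
  note st = struct[OF hyps]
  show ?thesis using d1 d2 dV st by blast
qed

lemma UU_facts:
  assumes xy: "x \<in> B \<inter> U" "y \<in> B \<inter> U" "x \<noteq> y"
  shows "DF C1 (dd C1 - 2) \<and> DF C2 (dd C2)"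
proof -
  have xyV: "x \<in> V" "y \<in> V" using xy BV by auto
  obtain P where P: "perfect_matching (V - {x, y}) (vdel E ends {x, y}) ends P"
    using bicrit xyV xy(3) by blast
  have bal: "(\<Sum>v\<in>V - {x, y}. col v) = (if e2 \<in> P then 2 else 0) - (if e1 \<in> P then 2 else 0)"
    by (rule balance[OF xyV xy(3) P])
  have "(\<Sum>v\<in>V - {x, y}. col v) = 2" using sum_minus2[OF xyV xy(3)] PH_facts xy UW by auto
  then have e21: "e2 \<in> P" "e1 \<notin> P" using bal by (auto split: if_splits)
  have hy: "P \<subseteq> E \<and> (\<forall>v\<in>V - B. \<exists>!f. f \<in> P \<and> v \<in> ends f)
    \<and> (\<forall>b\<in>B. \<forall>f\<in>P. \<forall>f'\<in>P. b \<in> ends f \<longrightarrow> b \<in> ends f' \<longrightarrow> f = f')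
    \<and> (\<forall>f\<in>P. x \<in> ends f \<longrightarrow> ends f \<subseteq> B) \<and> (\<forall>f\<in>P. y \<in> ends f \<longrightarrow> ends f \<subseteq> B)"
    using bicrit_hyps[OF _ _ xy(3) P] xy by blast
  have xB: "x \<in> B" "y \<in> B" using xy by auto
  have d1: "DF C1 (dd C1 - 2)" using dval[of P x y C1] hy xB xy(3) C1(1) e21 e2C1 e1_not_C1 by simp
  have d2: "DF C2 (dd C2)" using dval[of P x y C2] hy xB xy(3) C2(1) e21 e2_not_C2 by simp
  show ?thesis using d1 d2 by blast
qed

lemma WW_facts:
  assumes xy: "x \<in> B \<inter> W" "y \<in> B \<inter> W" "x \<noteq> y"
  shows "DF C1 (dd C1) \<and> DF C2 (dd C2 + 2)"
proof -
  have xyV: "x \<in> V" "y \<in> V" using xy BV by auto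
  obtain P where P: "perfect_matching (V - {x, y}) (vdel E ends {x, y}) ends P"
    using bicrit xyV xy(3) by blast
  have bal: "(\<Sum>v\<in>V - {x, y}. col v) = (if e2 \<in> P then 2 else 0) - (if e1 \<in> P then 2 else 0)"
    by (rule balance[OF xyV xy(3) P])
  have "(\<Sum>v\<in>V - {x, y}. col v) = -2" using sum_minus2[OF xyV xy(3)] PH_facts xy UW by auto
  then have e21: "e1 \<in> P" "e2 \<notin> P" using bal by (auto split: if_splits)
  have hy: "P \<subseteq> E \<and> (\<forall>v\<in>V - B. \<exists>!f. f \<in> P \<and> v \<in> ends f)
    \<and> (\<forall>b\<in>B. \<forall>f\<in>P. \<forall>f'\<in>P. b \<in> ends f \<longrightarrow> b \<in> ends f' \<longrightarrow> f = f')
    \<and> (\<forall>f\<in>P. x \<in> ends f \<longrightarrow> ends f \<subseteq> B) \<and> (\<forall>f\<in>P. y \<in> ends f \<longrightarrow> ends f \<subseteq> B)"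
    using bicrit_hyps[OF _ _ xy(3) P] xy by blast
  have xB: "x \<in> B" "y \<in> B" using xy by auto
  have d1: "DF C1 (dd C1)" using dval[of P x y C1] hy xB xy(3) C1(1) e21 e2C1 e1_not_C1 by simp
  have d2: "DF C2 (dd C2 + 2)" using dval[of P x y C2] hy xB xy(3) C2(1) e21 e1C2 by simp
  show ?thesis using d1 d2 by blast
qed

end

context S begin

lemma uwV: "u \<in> V" "w \<in> V" using ends_props eE uw by auto

lemma single_not_C: "{x} \<in> CS \<Longrightarrow> x \<notin> C1 \<and> x \<notin> C2"
proof -
  assume x: "{x} \<in> CS"
  have "x \<in> C1 \<Longrightarrow> False"
  proof -
    assume "x \<in> C1"
    then have "{x} = C1" using CS_disj[OF x C1(1)] by simp
    then have "card C1 = 1" by (metis is_singleton_altdef is_singleton_def)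
    then show False using C1(2) by simp
  qed
  moreover have "x \<in> C2 \<Longrightarrow> False"
  proof -
    assume "x \<in> C2"
    then have "{x} = C2" using CS_disj[OF x C2(1)] by simp
    then have "card C2 = 1" by (metis is_singleton_altdef is_singleton_def)
    then show False using C2(2) by simp
  qed
  ultimately show ?thesis by blast
qed

lemma W1_empty:
  assumes Bp: "B \<inter> U = {p}" and y: "y \<in> W" "{y} \<in> CS"
  shows False
proof -
  have yVB: "y \<in> V - B" using CS_sub[OF y(2)] by blast
  have pU: "p \<in> U" "p \<in> B" using Bp by auto
  have XV: "{p, u} \<subseteq> V" using pU BV uwV by auto
  have cX: "card {p, u} \<le> 2" by (simp add: card_insert_le_m1)
  have yX: "y \<notin> {p, u}" using pU uw y UW by auto
  have nb: "\<forall>f\<in>E. y \<in> ends f \<longrightarrow> ends f \<subseteq> insert y {p, u}"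
  proof (intro ballI impI)
    fix f assume f: "f \<in> E" "y \<in> ends f"
    show "ends f \<subseteq> insert y {p, u}"
    proof (cases "f = e")
      case True
      then have "y = w" using f uw y UW by auto
      then show ?thesis using True uw by auto
    next
      case fne: False
      have "f \<noteq> e1" using f e1U y UW by auto
      moreover have "f \<noteq> e2" using f e2C1 single_not_C[OF y(2)] by auto
      ultimately obtain a b where ab: "a \<in> U" "b \<in> W" "ends f = {a, b}" using Hedge f by blast
      have "y = b" using ab f y UW by auto
      have "a \<in> B"
      proof (rule ccontr)
        assume "a \<notin> B"
        then have "a \<in> {y}" using closed[OF y(2) f(1) fne f(2), of a] ab by auto
        then show False using ab y UW by auto
      qed
      then have "a = p" using ab Bp by auto
      then show ?thesis using ab \<open>y = b\<close> by auto
    qed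
  qed
  show False using tc_lemma[OF _ XV cX yX nb] yVB by blast
qed

lemma U2_empty:
  assumes Bq: "B \<inter> W = {q}" and y: "y \<in> U" "{y} \<in> CS"
  shows False
proof -
  have yVB: "y \<in> V - B" using CS_sub[OF y(2)] by blast
  have qW: "q \<in> W" "q \<in> B" using Bq by auto
  have XV: "{q, w} \<subseteq> V" using qW BV uwV by auto
  have cX: "card {q, w} \<le> 2" by (simp add: card_insert_le_m1)
  have yX: "y \<notin> {q, w}" using qW uw y UW by auto
  have nb: "\<forall>f\<in>E. y \<in> ends f \<longrightarrow> ends f \<subseteq> insert y {q, w}"
  proof (intro ballI impI)
    fix f assume f: "f \<in> E" "y \<in> ends f"
    show "ends f \<subseteq> insert y {q, w}"
    proof (cases "f = e")
      case True
      then have "y = u" using f uw y UW by auto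
      then show ?thesis using True uw by auto
    next
      case fne: False
      have "f \<noteq> e2" using f e2W y UW by auto
      moreover have "f \<noteq> e1" using f e1C2 single_not_C[OF y(2)] by auto
      ultimately obtain a b where ab: "a \<in> U" "b \<in> W" "ends f = {a, b}" using Hedge f by blast
      have "y = a" using ab f y UW by auto
      have "b \<in> B"
      proof (rule ccontr)
        assume "b \<notin> B"
        then have "b \<in> {y}" using closed[OF y(2) f(1) fne f(2), of b] ab by auto
        then show False using ab y UW by auto
      qed
      then have "b = q" using ab Bq by auto
      then show ?thesis using ab \<open>y = a\<close> by auto
    qed
  qed
  show False using tc_lemma[OF _ XV cX yX nb] yVB by blast
qed

lemma Qcontra:
  assumes uC1: "u \<in> C1" and Bq: "B \<inter> W = {q}" and dC1: "dd C1 = -1"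
  shows False
proof -
  have c2: "card (ends e2) = 2" using ends_props e12 by blast
  then obtain a b where ab: "a \<noteq> b" "ends e2 = {a, b}" using card2_obtain by blast
  have abC: "a \<in> C1" "b \<in> C1" "a \<in> W" "b \<in> W" using ab e2C1 e2W by auto
  have abV: "a \<in> V" "b \<in> V" using abC CS_sub[OF C1(1)] by auto
  obtain Q where Q: "perfect_matching (V - {a, b}) (vdel E ends {a, b}) ends Q"
    using bicrit abV ab(1) by blast
  have QE: "Q \<subseteq> vdel E ends {a, b}" and covQ: "\<forall>v\<in>V - {a, b}. \<exists>!f. f \<in> Q \<and> v \<in> ends f"
    using Q unfolding perfect_matching_def by auto
  have QE': "Q \<subseteq> E" using QE unfolding vdel_def by blast
  have avoid: "\<forall>f\<in>Q. ends f \<inter> {a, b} = {}" using QE unfolding vdel_def by blast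
  define K' where "K' = C1 - {a, b}"
  have K'V: "K' \<subseteq> V" unfolding K'_def using CS_sub[OF C1(1)] by blast
  have covK: "\<forall>v\<in>K'. \<exists>!f. f \<in> Q \<and> v \<in> ends f" using covQ K'V unfolding K'_def by blast
  have e2Q: "e2 \<notin> Q" using avoid ab by auto
  have e1K: "\<not> ends e1 \<subseteq> K'" using e1_not_C1 unfolding K'_def by blast
  define t where "t f = (\<Sum>v\<in>ends f \<inter> K'. col v)" for f
  have dK: "dd K' = (\<Sum>f\<in>bd Q K'. t f)"
    using d_formula[OF QE' K'V covK] e2Q e1K unfolding t_def by simp
  have finC1: "finite C1" using CS_fin C1(1) by blast
  have "dd C1 = dd K' + dd {a, b}" unfolding K'_def using finC1 abC by (intro sum.subset_diff) auto
  then have dK3: "dd K' = -3" using dC1 ab abC by simp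
  define Z where "Z = {f \<in> Q. q \<in> ends f}"
  have qV: "q \<in> V - {a, b}" using Bq BV abC CS_sub[OF C1(1)] by auto
  have cZ: "card Z \<le> 1"
  proof -
    have "\<exists>!f. f \<in> Q \<and> q \<in> ends f" using covQ qV by blast
    then obtain f0 where "Z = {f0}" unfolding Z_def by blast
    then show ?thesis by simp
  qed
  define SS where "SS = insert e Z"
  have finQ: "finite Q" using QE' finE finite_subset by blast
  have finZ: "finite Z" unfolding Z_def using finQ by simp
  have cS: "card SS \<le> 2" unfolding SS_def using cZ card_insert_if[OF finZ, of e] by auto
  have tf: "(t f = 1 \<or> t f = -1) \<and> (t f = -1 \<longrightarrow> f \<in> SS)" if f: "f \<in> bd Q K'" for f
  proof -
    obtain p where p: "ends f \<inter> K' = {p}" using single_end[OF QE' f] by blast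
    have tp: "t f = col p" unfolding t_def using p by simp
    have fQ: "f \<in> Q" using f bd_sub by blast
    have fE: "f \<in> E" using fQ QE' by blast
    have neg: "f \<in> SS" if tm: "t f = -1"
    proof (cases "f = e")
      case True then show ?thesis unfolding SS_def by simp
    next
      case fne: False
      have pW: "p \<notin> W" using tp tm by (auto split: if_splits)
      obtain r where r: "r \<in> ends f" "r \<notin> K'" using f unfolding bd_def by blast
      have pC1: "p \<in> C1" "p \<in> ends f" using p unfolding K'_def by auto
      have rab: "r \<notin> {a, b}" using avoid fQ r by blast
      then have rC1: "r \<notin> C1" using r unfolding K'_def by blast
      have "f \<noteq> e1" using pC1 e1C2 C12_disj by auto
      moreover have "f \<noteq> e2" using e2Q fQ by auto
      ultimately obtain a' b' where ab': "a' \<in> U" "b' \<in> W" "ends f = {a', b'}" using Hedge fE by blast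
      have "p = a'" using pC1 ab' pW by auto
      have prne: "p \<noteq> r" using pC1 rC1 by auto
      then have "r = b'" using r ab' \<open>p = a'\<close> by auto
      have "r \<in> B"
      proof (rule ccontr)
        assume "r \<notin> B"
        then have "r \<in> C1" using closed[OF C1(1) fE fne pC1(2) r(1) pC1(1)] by blast
        then show False using rC1 by blast
      qed
      then have "r = q" using Bq \<open>r = b'\<close> ab' by auto
      then show ?thesis unfolding SS_def Z_def using fQ r by blast
    qed
    show ?thesis using tp neg by auto
  qed
  have finbd: "finite (bd Q K')" using bd_sub[of Q K'] QE' finE finite_subset by metis
  have "(\<Sum>f\<in>bd Q K'. (if f \<in> SS then -1 else 0)) \<le> (\<Sum>f\<in>bd Q K'. t f)"
  proof (rule sum_mono)
    fix f assume "f \<in> bd Q K'"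
    then show "(if f \<in> SS then -1 else 0) \<le> t f" using tf by fastforce
  qed
  moreover have "(\<Sum>f\<in>bd Q K'. (if f \<in> SS then -1 else 0)) = (\<Sum>f\<in>{f \<in> bd Q K'. f \<in> SS}. -1::int)"
    using sum.inter_filter[OF finbd, of "\<lambda>_. -1::int" "\<lambda>f. f \<in> SS"] by simp
  moreover have "card {f \<in> bd Q K'. f \<in> SS} \<le> card SS"
    unfolding SS_def using finZ by (intro card_mono) auto
  ultimately have "- int (card SS) \<le> (\<Sum>f\<in>bd Q K'. t f)" by simp
  then show False using dK dK3 cS by linarith
qed

end

context S begin

lemma core:
  "dd C1 = 1 \<and> dd C2 = -1
   \<and> (u \<in> {x \<in> U. {x} \<in> CS} \<or> ({x \<in> U. {x} \<in> CS} = {} \<and> u \<in> C2))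
   \<and> (w \<in> {x \<in> W. {x} \<in> CS} \<or> ({x \<in> W. {x} \<in> CS} = {} \<and> w \<in> C1))"
proof -
  obtain p q where pq: "p \<in> B \<inter> U" "q \<in> B \<inter> W" "ends es = {p, q}" using es_ends by blast
  note PH = PH_facts
  have uVB: "u \<in> V - B" "w \<in> V - B" using PH uwV by auto
  have partu: "u \<in> C1 \<or> u \<in> C2 \<or> {u} \<in> CS" using partition uVB by blast
  have partw: "w \<in> C1 \<or> w \<in> C2 \<or> {w} \<in> CS" using partition uVB by blast
  have sep1: "u \<in> C1 \<Longrightarrow> w \<notin> C1" using PH C1(1) by blast
  have sep2: "u \<in> C2 \<Longrightarrow> w \<notin> C2" using PH C2(1) by blast
  have DH1: "DF C1 (dd C1)" and DH2: "DF C2 (dd C2)" using PH by auto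
  have uU: "u \<in> U" "w \<in> W" using uw by auto
  show ?thesis
  proof (cases "\<exists>x y. x \<in> B \<inter> U \<and> y \<in> B \<inter> U \<and> x \<noteq> y")
    case HU: True
    then obtain x y where xy: "x \<in> B \<inter> U" "y \<in> B \<inter> U" "x \<noteq> y" by blast
    have UU1: "DF C1 (dd C1 - 2)" and UU2: "DF C2 (dd C2)" using UU_facts[OF xy] by auto
    have R1: "u \<notin> C1" "w \<notin> C1" "dd C1 = 1" using DH1 UU1 unfolding DF_def by (cases "odd (card C1)"; auto)+
    show ?thesis
    proof (cases "\<exists>x y. x \<in> B \<inter> W \<and> y \<in> B \<inter> W \<and> x \<noteq> y")
      case True
      then obtain x' y' where xy': "x' \<in> B \<inter> W" "y' \<in> B \<inter> W" "x' \<noteq> y'" by blast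
      have WW2: "DF C2 (dd C2 + 2)" using WW_facts[OF xy'] by auto
      have R2: "u \<notin> C2" "w \<notin> C2" "dd C2 = -1" using DH2 WW2 unfolding DF_def by (cases "odd (card C2)"; auto)+
      have "{u} \<in> CS" "{w} \<in> CS" using partu partw R1 R2 by auto
      then show ?thesis using R1 R2 uU by auto
    next
      case False
      then have Bq: "B \<inter> W = {q}" using pq by blast
      have U2e: "{x \<in> U. {x} \<in> CS} = {}" using U2_empty[OF Bq] by blast
      have uC2: "u \<in> C2" using partu R1 U2e uU by auto
      have "w \<notin> C2" using sep2 uC2 by blast
      then have "{w} \<in> CS" using partw R1 by auto
      moreover have "dd C2 = -1" using DH2 uC2 unfolding DF_def by blast
      ultimately show ?thesis using R1 uC2 U2e uU by auto
    qed
  next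
    case False
    then have Bp: "B \<inter> U = {p}" using pq by blast
    have W1e: "{x \<in> W. {x} \<in> CS} = {}" using W1_empty[OF Bp] by blast
    show ?thesis
    proof (cases "\<exists>x y. x \<in> B \<inter> W \<and> y \<in> B \<inter> W \<and> x \<noteq> y")
      case True
      then obtain x' y' where xy': "x' \<in> B \<inter> W" "y' \<in> B \<inter> W" "x' \<noteq> y'" by blast
      have WW2: "DF C2 (dd C2 + 2)" using WW_facts[OF xy'] by auto
      have R2: "u \<notin> C2" "w \<notin> C2" "dd C2 = -1" using DH2 WW2 unfolding DF_def by (cases "odd (card C2)"; auto)+
      have wC1: "w \<in> C1" using partw R2 W1e uU by auto
      have "u \<notin> C1" using sep1 wC1 by blast
      then have "{u} \<in> CS" using partu R2 by auto
      moreover have "dd C1 = 1" using DH1 wC1 unfolding DF_def by blast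
      ultimately show ?thesis using R2 wC1 W1e uU by auto
    next
      case False
      then have Bq: "B \<inter> W = {q}" using pq by blast
      have U2e: "{x \<in> U. {x} \<in> CS} = {}" using U2_empty[OF Bq] by blast
      have uC: "u \<in> C1 \<or> u \<in> C2" using partu U2e uU by auto
      have wC: "w \<in> C1 \<or> w \<in> C2" using partw W1e uU by auto
      have "u \<notin> C1"
      proof
        assume uC1: "u \<in> C1"
        then have "dd C1 = -1" using DH1 unfolding DF_def by blast
        then show False using Qcontra[OF uC1 Bq] by blast
      qed
      then have uC2: "u \<in> C2" using uC by blast
      then have wC1: "w \<in> C1" using wC sep2 by blast
      have "dd C1 = 1" using DH1 wC1 unfolding DF_def by blast
      moreover have "dd C2 = -1" using DH2 uC2 unfolding DF_def by blast
      ultimately show ?thesis using uC2 wC1 U2e W1e by auto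
    qed
  qed
qed

end

context S begin

lemma dd_card: "K \<subseteq> V \<Longrightarrow> dd K = int (card (K \<inter> W)) - int (card (K \<inter> U))"
proof -
  assume KV: "K \<subseteq> V"
  have finK: "finite K" using KV finV finite_subset by blast
  have KUW: "K = (K \<inter> W) \<union> (K \<inter> U)" using KV UW by blast
  have "dd K = dd (K \<inter> W) + dd (K \<inter> U)"
    using sum.union_disjoint[of "K \<inter> W" "K \<inter> U" col] finK UW KUW by auto
  moreover have "dd (K \<inter> W) = int (card (K \<inter> W))" by simp
  moreover have "dd (K \<inter> U) = - int (card (K \<inter> U))" using UW by (simp add: disjoint_iff)
  ultimately show ?thesis by simp
qed

lemma cross:
  assumes K: "K \<in> CS" "K' \<in> CS" "K \<noteq> K'" and xy: "x \<in> K" "y \<in> K'" and f: "f \<in> E" "ends f = {x, y}"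
  shows "f = e"
proof (rule ccontr)
  assume fne: "f \<noteq> e"
  have "y \<notin> B" using CS_sub[OF K(2)] xy by blast
  then have "y \<in> K" using closed[OF K(1) f(1) fne, of x y] f xy by auto
  then show False using CS_disj K xy by blast
qed

lemma eb:
  assumes X: "\<forall>x\<in>X. \<forall>y\<in>Y. \<forall>f\<in>E. ends f = {x, y} \<longrightarrow> f = e" and "u \<in> X" "w \<in> Y"
  shows "edges_between E ends X Y = {e}"
  unfolding edges_between_def using assms eE uw by auto

lemma card_single: "{x} \<in> CS \<Longrightarrow> {x} \<noteq> C1 \<and> {x} \<noteq> C2" using single_not_C by blast

lemma final:
  defines "U1 \<equiv> B \<inter> U" and "W2 \<equiv> B \<inter> W"
    and "U2 \<equiv> {x \<in> U. {x} \<in> CS}"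
    and "W1 \<equiv> {x \<in> W. {x} \<in> CS}"
    and "U3 \<equiv> C1 \<inter> U" and "W3 \<equiv> C1 \<inter> W"
    and "U4 \<equiv> C2 \<inter> U" and "W4 \<equiv> C2 \<inter> W"
  shows "(card U1 = card W1 + 1 \<and> card U4 = card W4 + 1 \<and> card W2 = card U2 + 1
            \<and> card W3 = card U3 + 1)
       \<and> (U2 \<noteq> {} \<longrightarrow>
            (W1 \<noteq> {} \<longrightarrow> edges_between E ends U2 W1 = {e})
          \<and> (W1 = {} \<longrightarrow> edges_between E ends U2 W3 = {e}))
       \<and> (U2 = {} \<longrightarrow>
            (W1 \<noteq> {} \<longrightarrow> edges_between E ends U4 W1 = {e})
          \<and> (W1 = {} \<longrightarrow> edges_between E ends U4 W3 = {e}))"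
proof -
  note co = core
  have C1V: "C1 \<subseteq> V" and C2V: "C2 \<subseteq> V" using CS_sub C1(1) C2(1) by auto
  have d3: "int (card W3) = int (card U3) + 1" using co dd_card[OF C1V] unfolding U3_def W3_def by (simp add: Int_commute)
  have d4: "int (card U4) = int (card W4) + 1" using co dd_card[OF C2V] unfolding U4_def W4_def by (simp add: Int_commute)
  have VW: "V \<inter> W = W" "V \<inter> U = U" using UW by auto
  have dV: "int (card W) = int (card U)" using PH_facts dd_card[of V] VW by simp
  have finV': "finite U" "finite W" using finV UW by (metis finite_Un)+
  have sgVB: "{x} \<in> CS \<Longrightarrow> x \<in> V - B" for x using CS_sub by blast
  have Upart: "U = U1 \<union> U2 \<union> U3 \<union> U4"
  proof
    show "U \<subseteq> U1 \<union> U2 \<union> U3 \<union> U4"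
    proof
      fix x assume x: "x \<in> U"
      then have "x \<in> V" using UW by blast
      show "x \<in> U1 \<union> U2 \<union> U3 \<union> U4"
      proof (cases "x \<in> B")
        case True then show ?thesis unfolding U1_def using x by blast
      next
        case False then show ?thesis using partition[of x] \<open>x \<in> V\<close> x unfolding U2_def U3_def U4_def by blast
      qed
    qed
    show "U1 \<union> U2 \<union> U3 \<union> U4 \<subseteq> U" unfolding U1_def U2_def U3_def U4_def by blast
  qed
  have Wpart: "W = W1 \<union> W2 \<union> W3 \<union> W4"
  proof
    show "W \<subseteq> W1 \<union> W2 \<union> W3 \<union> W4"
    proof
      fix x assume x: "x \<in> W"
      then have "x \<in> V" using UW by blast
      show "x \<in> W1 \<union> W2 \<union> W3 \<union> W4"
      proof (cases "x \<in> B")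
        case True then show ?thesis unfolding W2_def using x by blast
      next
        case False then show ?thesis using partition[of x] \<open>x \<in> V\<close> x unfolding W1_def W3_def W4_def by blast
      qed
    qed
    show "W1 \<union> W2 \<union> W3 \<union> W4 \<subseteq> W" unfolding W1_def W2_def W3_def W4_def by blast
  qed
  have C1B: "C1 \<inter> B = {}" "C2 \<inter> B = {}" using CS_sub C1(1) C2(1) by auto
  have fins: "finite U1" "finite U2" "finite U3" "finite U4" "finite W1" "finite W2" "finite W3" "finite W4"
    using finV' unfolding U1_def U2_def U3_def U4_def W1_def W2_def W3_def W4_def by auto
  have cU: "card U = card U1 + card U2 + card U3 + card U4"
  proof -
    have a: "U1 \<inter> U2 = {}" unfolding U1_def U2_def using sgVB by blast
    have b: "(U1 \<union> U2) \<inter> U3 = {}" unfolding U1_def U2_def U3_def using sgVB C1B single_not_C by blast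
    have c: "(U1 \<union> U2 \<union> U3) \<inter> U4 = {}" unfolding U1_def U2_def U3_def U4_def using sgVB C1B single_not_C C12_disj by blast
    show ?thesis unfolding Upart using fins a b c by (simp add: card_Un_disjoint)
  qed
  have cW: "card W = card W1 + card W2 + card W3 + card W4"
  proof -
    have a: "W1 \<inter> W2 = {}" unfolding W1_def W2_def using sgVB by blast
    have b: "(W1 \<union> W2) \<inter> W3 = {}" unfolding W1_def W2_def W3_def using sgVB C1B single_not_C by blast
    have c: "(W1 \<union> W2 \<union> W3) \<inter> W4 = {}" unfolding W1_def W2_def W3_def W4_def using sgVB C1B single_not_C C12_disj by blast
    show ?thesis unfolding Wpart using fins a b c by (simp add: card_Un_disjoint)
  qed
  have cB: "card B = card U1 + card W2"
  proof -
    have "B = U1 \<union> W2" unfolding U1_def W2_def using BV UW by blast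
    moreover have "U1 \<inter> W2 = {}" unfolding U1_def W2_def using UW by blast
    ultimately show ?thesis using fins by (simp add: card_Un_disjoint)
  qed
  have oC1: "odd (card C1)"
  proof -
    have "C1 = U3 \<union> W3" unfolding U3_def W3_def using C1V UW by blast
    then have "card C1 = card (U3 \<union> W3)" by (rule arg_cong)
    also have "\<dots> = card U3 + card W3" using fins UW unfolding U3_def W3_def by (intro card_Un_disjoint) auto
    finally have "card C1 = card U3 + card W3" .
    moreover have "card W3 = card U3 + 1" using d3 by linarith
    ultimately have "card C1 = 2 * card U3 + 1" by simp
    then show ?thesis by simp
  qed
  have oC2: "odd (card C2)"
  proof -
    have "C2 = U4 \<union> W4" unfolding U4_def W4_def using C2V UW by blast
    then have "card C2 = card (U4 \<union> W4)" by (rule arg_cong)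
    also have "\<dots> = card U4 + card W4" using fins UW unfolding U4_def W4_def by (intro card_Un_disjoint) auto
    finally have "card C2 = card U4 + card W4" .
    moreover have "card U4 = card W4 + 1" using d4 by linarith
    ultimately have "card C2 = 2 * card W4 + 1" by simp
    then show ?thesis by simp
  qed
  define Sg where "Sg = U2 \<union> W1"
  have OCeq: "{K \<in> CS. odd (card K)} = (\<lambda>x. {x}) ` Sg \<union> {C1, C2}"
  proof
    show "{K \<in> CS. odd (card K)} \<subseteq> (\<lambda>x. {x}) ` Sg \<union> {C1, C2}"
    proof
      fix K assume K: "K \<in> {K \<in> CS. odd (card K)}"
      then have KC: "K \<in> CS" by blast
      show "K \<in> (\<lambda>x. {x}) ` Sg \<union> {C1, C2}"
      proof (cases "card K > 1")
        case True then show ?thesis using omega2 KC by blast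
      next
        case False
        then have "card K = 1" using K by (cases "card K") auto
        then obtain x where x: "K = {x}" by (metis card_1_singletonE)
        then have "x \<in> V" using sgVB KC by blast
        then have "x \<in> Sg" unfolding Sg_def U2_def W1_def using KC x UW by blast
        then show ?thesis using x by blast
      qed
    qed
    show "(\<lambda>x. {x}) ` Sg \<union> {C1, C2} \<subseteq> {K \<in> CS. odd (card K)}"
      unfolding Sg_def U2_def W1_def using C1(1) C2(1) oC1 oC2 by auto
  qed
  have "card ((\<lambda>x. {x}) ` Sg \<union> {C1, C2}) = card Sg + 2"
  proof -
    have disj: "(\<lambda>x. {x}) ` Sg \<inter> {C1, C2} = {}"
      unfolding Sg_def U2_def W1_def using single_not_C by fastforce
    have finSg: "finite Sg" unfolding Sg_def using fins by simp
    have "card ((\<lambda>x. {x}) ` Sg) = card Sg" by (rule card_image) (simp add: inj_on_def)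
    moreover have "card {C1, C2} = 2" using C12 by simp
    moreover have "card ((\<lambda>x. {x}) ` Sg \<union> {C1, C2}) = card ((\<lambda>x. {x}) ` Sg) + card {C1, C2}"
      using disj finSg by (intro card_Un_disjoint) auto
    ultimately show ?thesis by simp
  qed
  moreover have "card Sg = card U2 + card W1"
    unfolding Sg_def using fins UW unfolding U2_def W1_def by (subst card_Un_disjoint) auto
  moreover have "card {K \<in> CS. odd (card K)} = card B" using B_bar unfolding barrier_def by simp
  ultimately have cOC: "card B = card U2 + card W1 + 2" using OCeq by simp
  have nums: "card U1 = card W1 + 1 \<and> card U4 = card W4 + 1 \<and> card W2 = card U2 + 1 \<and> card W3 = card U3 + 1"
    using cU cW cB cOC d3 d4 dV by linarith
  have sgC: "{x} \<in> CS \<Longrightarrow> {x} \<noteq> C1" "{x} \<in> CS \<Longrightarrow> {x} \<noteq> C2" for x using card_single by blast+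
  have E1: "\<forall>x\<in>U2. \<forall>y\<in>W1. \<forall>f\<in>E. ends f = {x, y} \<longrightarrow> f = e"
  proof (intro ballI impI)
    fix x y f assume x: "x \<in> U2" and y: "y \<in> W1" and f: "f \<in> E" "ends f = {x, y}"
    have "{x} \<noteq> {y}" using x y UW unfolding U2_def W1_def by auto
    then show "f = e" using cross[of "{x}" "{y}" x y f] x y f unfolding U2_def W1_def by auto
  qed
  have E2: "\<forall>x\<in>U2. \<forall>y\<in>W3. \<forall>f\<in>E. ends f = {x, y} \<longrightarrow> f = e"
  proof (intro ballI impI)
    fix x y f assume x: "x \<in> U2" and y: "y \<in> W3" and f: "f \<in> E" "ends f = {x, y}"
    show "f = e" using cross[of "{x}" C1 x y f] C1(1) sgC x y f unfolding U2_def W3_def by auto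
  qed
  have E3: "\<forall>x\<in>U4. \<forall>y\<in>W1. \<forall>f\<in>E. ends f = {x, y} \<longrightarrow> f = e"
  proof (intro ballI impI)
    fix x y f assume x: "x \<in> U4" and y: "y \<in> W1" and f: "f \<in> E" "ends f = {x, y}"
    show "f = e" using cross[of C2 "{y}" x y f] C2(1) sgC x y f unfolding U4_def W1_def by auto
  qed
  have E4: "\<forall>x\<in>U4. \<forall>y\<in>W3. \<forall>f\<in>E. ends f = {x, y} \<longrightarrow> f = e"
  proof (intro ballI impI)
    fix x y f assume x: "x \<in> U4" and y: "y \<in> W3" and f: "f \<in> E" "ends f = {x, y}"
    show "f = e" using cross[of C2 C1 x y f] C1(1) C2(1) C12 x y f unfolding U4_def W3_def by auto
  qed
  have loc: "(u \<in> U2 \<or> (U2 = {} \<and> u \<in> U4)) \<and> (w \<in> W1 \<or> (W1 = {} \<and> w \<in> W3))"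
    using co uw unfolding U2_def W1_def U4_def W3_def by auto
  show ?thesis
  proof (intro conjI impI)
    show "card U1 = card W1 + 1" "card U4 = card W4 + 1" "card W2 = card U2 + 1" "card W3 = card U3 + 1"
      using nums by auto
  next
    assume "U2 \<noteq> {}" "W1 \<noteq> {}"
    then show "edges_between E ends U2 W1 = {e}" using eb[OF E1] loc by blast
  next
    assume "U2 \<noteq> {}" "W1 = {}"
    then show "edges_between E ends U2 W3 = {e}" using eb[OF E2] loc by blast
  next
    assume "U2 = {}" "W1 \<noteq> {}"
    then show "edges_between E ends U4 W1 = {e}" using eb[OF E3] loc by blast
  next
    assume "U2 = {}" "W1 = {}"
    then show "edges_between E ends U4 W3 = {e}" using eb[OF E4] loc by blast
  qed
qed

end
theorem mainTheorem10:
  fixes V :: "'v set" and E :: "'e set" and ends :: "'e \<Rightarrow> 'v set"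
    and e1 e2 e es :: 'e and U W B C1 C2 :: "'v set" and u w :: 'v
  assumes brick: "brick V E ends"
    and e12: "e1 \<in> E" "e2 \<in> E" "e1 \<noteq> e2"
    and H_mc: "matching_covered V (E - {e1, e2}) ends"
    and H_bip: "bipartite_with V (E - {e1, e2}) ends U W"
    and e1U: "ends e1 \<subseteq> U" and e2W: "ends e2 \<subseteq> W"
    and eE: "e \<in> E - {e1, e2}"
    and e_nonrem_G: "\<not> removable V E ends e"
    and e_nonrem_H: "\<not> removable V (E - {e1, e2}) ends e"
    and uw: "u \<in> U" "w \<in> W" "ends e = {u, w}"
    and es: "es \<in> E - {e1, e2, e}"
    and es_G: "\<not> admissible V (E - {e}) ends es"
    and es_H: "\<not> admissible V (E - {e1, e2, e}) ends es"
    and B_bar: "barrier V (E - {e}) ends B" and esB: "ends es \<subseteq> B"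
    and B_max: "\<forall>B'. barrier V (E - {e}) ends B' \<and> ends es \<subseteq> B' \<and> B \<subseteq> B' \<longrightarrow> B' = B"
    and C1: "C1 \<in> components (V - B) (vdel (E - {e}) ends B) ends" "card C1 > 1"
    and C2: "C2 \<in> components (V - B) (vdel (E - {e}) ends B) ends" "card C2 > 1"
    and C12: "C1 \<noteq> C2"
    and omega2: "\<forall>C \<in> components (V - B) (vdel (E - {e}) ends B) ends. card C > 1 \<longrightarrow> C = C1 \<or> C = C2"
    and e2C1: "ends e2 \<subseteq> C1" and e1C2: "ends e1 \<subseteq> C2"
  defines "U1 \<equiv> B \<inter> U" and "W2 \<equiv> B \<inter> W"
    and "U2 \<equiv> {x \<in> U. {x} \<in> components (V - B) (vdel (E - {e}) ends B) ends}"
    and "W1 \<equiv> {x \<in> W. {x} \<in> components (V - B) (vdel (E - {e}) ends B) ends}"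
    and "U3 \<equiv> C1 \<inter> U" and "W3 \<equiv> C1 \<inter> W"
    and "U4 \<equiv> C2 \<inter> U" and "W4 \<equiv> C2 \<inter> W"
  shows "(card U1 = card W1 + 1 \<and> card U4 = card W4 + 1 \<and> card W2 = card U2 + 1
            \<and> card W3 = card U3 + 1)
       \<and> (U2 \<noteq> {} \<longrightarrow>
            (W1 \<noteq> {} \<longrightarrow> edges_between E ends U2 W1 = {e})
          \<and> (W1 = {} \<longrightarrow> edges_between E ends U2 W3 = {e}))
       \<and> (U2 = {} \<longrightarrow>
            (W1 \<noteq> {} \<longrightarrow> edges_between E ends U4 W1 = {e})
          \<and> (W1 = {} \<longrightarrow> edges_between E ends U4 W3 = {e}))"
proof -
  have tc: "three_connected V E ends" and nb: "\<not> bipartite V E ends"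
    and bic: "\<forall>x\<in>V. \<forall>y\<in>V. x \<noteq> y \<longrightarrow> (\<exists>M. perfect_matching (V - {x, y}) (vdel E ends {x, y}) ends M)"
    using brick unfolding brick_def by auto
  have G: "graph V E ends" using tc unfolding three_connected_def by blast
  interpret S V E ends e1 e2 e es U W B C1 C2 u w
    using G tc bic e12 H_mc H_bip e1U e2W eE uw es B_bar esB C1 C2 C12 omega2 e2C1 e1C2
    by unfold_locales auto
  show ?thesis unfolding assms(29-36) using final by simp
qed

end
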